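(* Work in ZFC together with the Continuum Hypothesis. Let $(\Omega,\mathcal{F})$ be a measurable space with a right-continuous filtration $\mathbb{F}=(\mathcal{F}_t)_{t\in[0,1]}$, $\mathcal{P}$ a family of probability measures on $(\Omega,\mathcal{F})$, and $\mathbb{F}^*=(\mathcal{F}^*_t)_{t\in[0,1]}$ with $\mathcal{F}^*_t:=\bigcap_{P\in\mathcal{P}}\mathcal{F}_t\vee\mathcal{N}^P$, where $\mathcal{N}^P$ is the collection of $(\mathcal{F},P)$-null sets. Let $(Y^n)_{n\ge1}$ be a sequence of $\mathbb{F}^*$-adapted càdlàg processes. Assume that for each $P\in\mathcal{P}$ there exists a càdlàg process $Y^P$ such that $Y^n_t\to Y^P_t$ in $P$-probability for all $t\in[0,1]$. Then there exists an $\mathbb{F}^*$-adapted càdlàg process $Y$ such that $Y=Y^P$ $P$-a.s. for all $P\in\mathcal{P}$. *)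

theory Defs
  imports "HOL-Probability.Probability"
begin

definition CH :: bool where
  "CH \<longleftrightarrow> (\<forall>A :: real set. countable A \<or> (\<exists>f. bij_betw f A (UNIV :: real set)))"

definition filtration :: "'a measure \<Rightarrow> (real \<Rightarrow> 'a set set) \<Rightarrow> bool" where
  "filtration M F \<longleftrightarrow>
     (\<forall>t\<in>{0..1}. sigma_algebra (space M) (F t) \<and> F t \<subseteq> sets M) \<and>
     (\<forall>s t. 0 \<le> s \<longrightarrow> s \<le> t \<longrightarrow> t \<le> 1 \<longrightarrow> F s \<subseteq> F t)"

definition right_continuous_filtration :: "'a measure \<Rightarrow> (real \<Rightarrow> 'a set set) \<Rightarrow> bool" where
  "right_continuous_filtration M F \<longleftrightarrow> filtration M F \<and>
     (\<forall>t\<in>{0..<1}. F t = (\<Inter>s\<in>{t<..1}. F s))"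

definition null_sets_of :: "'a measure \<Rightarrow> 'a measure \<Rightarrow> 'a set set" where
  "null_sets_of M P = {A. A \<subseteq> space M \<and> (\<exists>B\<in>sets M. A \<subseteq> B \<and> emeasure P B = 0)}"

definition Fstar :: "'a measure \<Rightarrow> 'a measure set \<Rightarrow> (real \<Rightarrow> 'a set set) \<Rightarrow> real \<Rightarrow> 'a set set" where
  "Fstar M \<P> F t = Pow (space M) \<inter>
     (\<Inter>P\<in>\<P>. sigma_sets (space M) (F t \<union> null_sets_of M P))"

definition adapted :: "'a measure \<Rightarrow> (real \<Rightarrow> 'a set set) \<Rightarrow> (real \<Rightarrow> 'a \<Rightarrow> real) \<Rightarrow> bool" where
  "adapted M G Y \<longleftrightarrow> (\<forall>t\<in>{0..1}. Y t \<in> measurable (sigma (space M) (G t)) borel)"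

definition cadlag_path :: "(real \<Rightarrow> real) \<Rightarrow> bool" where
  "cadlag_path f \<longleftrightarrow> (\<forall>t\<in>{0..<1}. (f \<longlongrightarrow> f t) (at_right t)) \<and>
                       (\<forall>t\<in>{0<..1}. \<exists>l. (f \<longlongrightarrow> l) (at_left t))"

definition cadlag :: "'a measure \<Rightarrow> (real \<Rightarrow> 'a \<Rightarrow> real) \<Rightarrow> bool" where
  "cadlag M Y \<longleftrightarrow> (\<forall>\<omega>\<in>space M. cadlag_path (\<lambda>t. Y t \<omega>))"

end

theory Submission
  imports Defs
begin


definition sparse :: "nat set \<Rightarrow> (nat \<Rightarrow> nat) \<Rightarrow> bool" where
  "sparse S g \<longleftrightarrow> (\<exists>h. strict_mono h \<and> S = range h \<and> (\<forall>j. g j \<le> h j))"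

lemma sparse_infinite: "sparse S g \<Longrightarrow> infinite S"
  unfolding sparse_def using strict_mono_imp_inj_on range_inj_infinite by blast

lemma pseudo:
  fixes T :: "'i \<Rightarrow> nat set"
  assumes I: "countable I"
    and fip: "\<And>J. finite J \<Longrightarrow> J \<subseteq> I \<Longrightarrow> infinite (\<Inter>i\<in>J. T i)"
  shows "\<exists>S. sparse S g \<and> (\<forall>i\<in>I. finite (S - T i))"
proof -
  define e where "e = from_nat_into I"
  define U where "U j = (\<Inter>i\<in>I \<inter> e ` {..j}. T i)" for j
  have Uinf: "infinite (U j)" for j unfolding U_def by (rule fip) auto
  define pick where "pick j lo = (LEAST n. n \<in> U j \<and> lo \<le> n)" for j lo
  have pick: "pick j lo \<in> U j \<and> lo \<le> pick j lo" for j lo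
  proof -
    have "\<exists>n. n \<in> U j \<and> lo \<le> n" using Uinf[of j] infinite_nat_iff_unbounded_le by blast
    then show ?thesis unfolding pick_def by (rule LeastI_ex)
  qed
  define h where "h = rec_nat (pick 0 (g 0)) (\<lambda>j hj. pick (Suc j) (max (g (Suc j)) (hj + 1)))"
  have h0: "h 0 = pick 0 (g 0)" and hS: "h (Suc j) = pick (Suc j) (max (g (Suc j)) (h j + 1))" for j
    unfolding h_def by simp_all
  have hUg: "h j \<in> U j \<and> g j \<le> h j" for j
  proof (cases j)
    case 0 then show ?thesis using pick[of 0 "g 0"] h0 by simp
  next
    case (Suc k) then show ?thesis using pick[of "Suc k" "max (g (Suc k)) (h k + 1)"] hS[of k] by simp
  qed
  then have hU: "h j \<in> U j" and hg: "g j \<le> h j" for j by auto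
  have "h j < h (Suc j)" for j using pick[of "Suc j" "max (g (Suc j)) (h j + 1)"] hS[of j] by simp
  then have sm: "strict_mono h" by (rule strict_monoI_Suc)
  have "finite (range h - T i)" if iI: "i \<in> I" for i
  proof -
    obtain k where k: "e k = i" using from_nat_into_surj[OF I iI] unfolding e_def by blast
    have "range h - T i \<subseteq> h ` {..<k}"
    proof
      fix x assume "x \<in> range h - T i"
      then obtain j where x: "x = h j" "h j \<notin> T i" by auto
      have "j < k"
      proof (rule ccontr)
        assume "\<not> j < k"
        then have "i \<in> I \<inter> e ` {..j}" using k iI by auto
        then have "U j \<subseteq> T i" unfolding U_def by blast
        then show False using hU[of j] x by auto
      qed
      then show "x \<in> h ` {..<k}" using x by auto
    qed
    then show ?thesis by (rule finite_subset) auto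
  qed
  then show ?thesis unfolding sparse_def using sm hg by blast
qed




lemma inj_to_real: "\<exists>\<iota> :: (nat \<Rightarrow> nat) \<Rightarrow> real. inj \<iota>"
proof -
  define i0 where "i0 f = range (\<lambda>n. prod_encode (n, f n))" for f :: "nat \<Rightarrow> nat"
  have "inj i0"
  proof (rule injI)
    fix f g assume eq: "i0 f = i0 g"
    show "f = g"
    proof
      fix n
      have "prod_encode (n, f n) \<in> i0 g" using eq unfolding i0_def by blast
      then obtain m where "prod_encode (n, f n) = prod_encode (m, g m)" unfolding i0_def by blast
      then show "f n = g n" by (auto simp: prod_encode_eq)
    qed
  qed
  moreover obtain b :: "nat set \<Rightarrow> real" where "bij b"
    using nat_sets_eqpoll_reals unfolding eqpoll_def by blast
  ultimately have "inj (b \<circ> i0)" by (simp add: bij_is_inj inj_compose)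
  then show ?thesis by blast
qed

lemma CH_wellorder:
  assumes CH
  shows "\<exists>R :: (real \<times> real) set. wf R \<and> (\<forall>x y. x \<noteq> y \<longrightarrow> (x,y) \<in> R \<or> (y,x) \<in> R)
     \<and> (\<forall>x. countable {y. (y,x) \<in> R})"
proof -
  define W where "W = card_of (UNIV :: real set)"
  have WO: "Well_order W" unfolding W_def by (rule card_of_Well_order)
  have F: "Field W = UNIV" unfolding W_def by (rule Field_card_of)
  have CO: "Card_order W" unfolding W_def by (rule card_of_Card_order)
  define R where "R = W - Id"
  have wf: "wf R" using WO unfolding R_def well_order_on_def by blast
  have tot: "(x,y) \<in> R \<or> (y,x) \<in> R" if "x \<noteq> y" for x y
    using WO F that unfolding R_def well_order_on_def linear_order_on_def total_on_def by auto
  have cnt: "countable {y. (y,x) \<in> R}" for x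
  proof -
    have eq: "{y. (y,x) \<in> R} = underS W x" unfolding R_def underS_def by auto
    have less: "(card_of (underS W x), W) \<in> ordLess" using card_of_underS[OF CO] F by auto
    show ?thesis
    proof (rule ccontr)
      assume nc: "\<not> countable {y. (y,x) \<in> R}"
      then obtain f where "bij_betw f (underS W x) (UNIV :: real set)"
        using assms unfolding CH_def eq by blast
      then have "(card_of (underS W x), W) \<in> ordIso" unfolding W_def using card_of_ordIso by blast
      then show False using not_ordLess_ordIso less by blast
    qed
  qed
  show ?thesis using wf tot cnt by blast
qed

lemma maxel:
  fixes S :: "'b \<Rightarrow> nat set"
  assumes "finite J" "J \<noteq> {}"
    and tot: "\<forall>a\<in>J. \<forall>b\<in>J. a \<noteq> b \<longrightarrow> (a,b) \<in> R \<or> (b,a) \<in> R"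
    and inc: "\<forall>a\<in>J. \<forall>b\<in>J. (b,a) \<in> R \<longrightarrow> finite (S a - S b)"
  shows "\<exists>m\<in>J. \<forall>y\<in>J. finite (S m - S y)"
  using assms
proof (induction J rule: finite_ne_induct)
  case (singleton x) then show ?case by auto
next
  case (insert a J)
  then obtain m where m: "m \<in> J" "\<forall>y\<in>J. finite (S m - S y)" by auto
  have "a \<noteq> m" using insert m by auto
  then have "(a,m) \<in> R \<or> (m,a) \<in> R" using insert.prems m by auto
  then show ?case
  proof
    assume "(a,m) \<in> R"
    then have "finite (S m - S a)" using insert.prems m by auto
    then show ?thesis using m by auto
  next
    assume "(m,a) \<in> R"
    then have f: "finite (S a - S m)" using insert.prems m by auto
    have "finite (S a - S y)" if "y \<in> J" for y
    proof -
      have "S a - S y \<subseteq> (S a - S m) \<union> (S m - S y)" by auto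
      then show ?thesis using f m that by (meson finite_Un finite_subset)
    qed
    then show ?thesis by auto
  qed
qed

lemma family:
  assumes CH
  shows "\<exists>Sf :: (nat \<Rightarrow> nat) \<Rightarrow> nat set. (\<forall>g. sparse (Sf g) g) \<and>
     (\<forall>g1 g2. \<exists>g. finite (Sf g - Sf g1) \<and> finite (Sf g - Sf g2))"
proof -
  obtain \<iota> :: "(nat \<Rightarrow> nat) \<Rightarrow> real" where inj: "inj \<iota>" using inj_to_real by blast
  define \<phi> where "\<phi> = inv \<iota>"
  have \<phi>: "\<phi> (\<iota> g) = g" for g unfolding \<phi>_def using inj by simp
  obtain R :: "(real \<times> real) set" where wf: "wf R" and tot: "\<And>x y. x \<noteq> y \<Longrightarrow> (x,y) \<in> R \<or> (y,x) \<in> R"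
    and cnt: "\<And>x. countable {y. (y,x) \<in> R}"
    using CH_wellorder[OF assms] by blast
  define step where "step T x = (SOME S. sparse S (\<phi> x) \<and> (\<forall>y. (y,x) \<in> R \<longrightarrow> finite (S - T y)))"
    for T :: "real \<Rightarrow> nat set" and x
  define Sr where "Sr = wfrec R step"
  have inv: "sparse (Sr x) (\<phi> x) \<and> (\<forall>y. (y,x) \<in> R \<longrightarrow> finite (Sr x - Sr y))" for x
    using wf
  proof (induction x rule: wf_induct_rule)
    case (less x)
    have "Sr x = step (cut Sr R x) x" unfolding Sr_def by (rule wfrec[OF wf])
    also have "\<dots> = step Sr x" unfolding step_def cut_def
      by (rule arg_cong[where f=Eps]) auto
    finally have eqS: "Sr x = step Sr x" .
    let ?I = "{y. (y,x) \<in> R}"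
    have fip: "infinite (\<Inter>i\<in>J. Sr i)" if J: "finite J" "J \<subseteq> ?I" for J
    proof (cases "J = {}")
      case True then show ?thesis by simp
    next
      case False
      have "\<exists>m\<in>J. \<forall>y\<in>J. finite (Sr m - Sr y)"
        apply (rule maxel[of J R Sr])
        using J False tot less by auto
      then obtain m where m: "m \<in> J" "\<forall>y\<in>J. finite (Sr m - Sr y)" by blast
      have "infinite (Sr m)" using less m J sparse_infinite by blast
      moreover have "finite (\<Union>y\<in>J. Sr m - Sr y)" by (rule finite_UN_I) (use m J in auto)
      ultimately have "infinite (Sr m - (\<Union>y\<in>J. Sr m - Sr y))" by (rule Diff_infinite_finite[rotated])
      moreover have "Sr m - (\<Union>y\<in>J. Sr m - Sr y) \<subseteq> (\<Inter>i\<in>J. Sr i)" by auto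
      ultimately show ?thesis using infinite_super by blast
    qed
    obtain S where "sparse S (\<phi> x) \<and> (\<forall>i\<in>?I. finite (S - Sr i))"
      using pseudo[OF cnt fip] by blast
    then have "\<exists>S. sparse S (\<phi> x) \<and> (\<forall>y. (y,x) \<in> R \<longrightarrow> finite (S - Sr y))" by auto
    then have "sparse (step Sr x) (\<phi> x) \<and> (\<forall>y. (y,x) \<in> R \<longrightarrow> finite (step Sr x - Sr y))"
      unfolding step_def by (rule someI_ex)
    then show ?case using eqS by simp
  qed
  define Sf where "Sf g = Sr (\<iota> g)" for g
  have "sparse (Sf g) g" for g using inv[of "\<iota> g"] \<phi> unfolding Sf_def by simp
  moreover have "\<exists>g. finite (Sf g - Sf g1) \<and> finite (Sf g - Sf g2)" for g1 g2
  proof (cases "\<iota> g1 = \<iota> g2")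
    case True then show ?thesis unfolding Sf_def by (intro exI[of _ g1]) auto
  next
    case False
    then have "(\<iota> g1, \<iota> g2) \<in> R \<or> (\<iota> g2, \<iota> g1) \<in> R" by (rule tot)
    then show ?thesis
    proof
      assume "(\<iota> g1, \<iota> g2) \<in> R"
      then show ?thesis using inv[of "\<iota> g2"] unfolding Sf_def by (intro exI[of _ g2]) auto
    next
      assume "(\<iota> g2, \<iota> g1) \<in> R"
      then show ?thesis using inv[of "\<iota> g1"] unfolding Sf_def by (intro exI[of _ g1]) auto
    qed
  qed
  ultimately show ?thesis by blast
qed




definition conv :: "nat set \<Rightarrow> (nat \<Rightarrow> real) \<Rightarrow> real \<Rightarrow> bool" where
  "conv S x a \<longleftrightarrow> (\<forall>\<epsilon>>0. finite {n\<in>S. \<epsilon> \<le> \<bar>x n - a\<bar>})"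

lemma conv_of_seq:
  assumes "(\<lambda>j. x (h j)) \<longlonglongrightarrow> a"
  shows "conv (range h) x a"
  unfolding conv_def
proof (intro allI impI)
  fix \<epsilon> :: real assume "\<epsilon> > 0"
  then obtain N where N: "\<forall>j\<ge>N. \<bar>x (h j) - a\<bar> < \<epsilon>"
    using assms unfolding LIMSEQ_def dist_real_def by blast
  have "{n\<in>range h. \<epsilon> \<le> \<bar>x n - a\<bar>} \<subseteq> h ` {..<N}"
  proof
    fix n assume "n \<in> {n\<in>range h. \<epsilon> \<le> \<bar>x n - a\<bar>}"
    then obtain j where "n = h j" "\<epsilon> \<le> \<bar>x (h j) - a\<bar>" by auto
    moreover have "j < N" using N calculation(2) by (meson linorder_not_less)
    ultimately show "n \<in> h ` {..<N}" by auto
  qed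
  then show "finite {n\<in>range h. \<epsilon> \<le> \<bar>x n - a\<bar>}" by (rule finite_subset) auto
qed

lemma conv_unique:
  assumes inf: "infinite S" and s1: "finite (S - S1)" and s2: "finite (S - S2)"
    and c1: "conv S1 x a" and c2: "conv S2 x b"
  shows "a = b"
proof (rule ccontr)
  assume ne: "a \<noteq> b"
  define \<epsilon> where "\<epsilon> = \<bar>a - b\<bar> / 2"
  have e: "\<epsilon> > 0" using ne unfolding \<epsilon>_def by simp
  have "S \<subseteq> (S - S1) \<union> (S - S2) \<union> {n\<in>S1. \<epsilon> \<le> \<bar>x n - a\<bar>} \<union> {n\<in>S2. \<epsilon> \<le> \<bar>x n - b\<bar>}"
  proof
    fix n assume n: "n \<in> S"
    have "\<not> (\<bar>x n - a\<bar> < \<epsilon> \<and> \<bar>x n - b\<bar> < \<epsilon>)" unfolding \<epsilon>_def by (smt (verit, best) abs_triangle_ineq4 field_sum_of_halves)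
    then show "n \<in> (S - S1) \<union> (S - S2) \<union> {n\<in>S1. \<epsilon> \<le> \<bar>x n - a\<bar>} \<union> {n\<in>S2. \<epsilon> \<le> \<bar>x n - b\<bar>}"
      using n by auto
  qed
  moreover have "finite ((S - S1) \<union> (S - S2) \<union> {n\<in>S1. \<epsilon> \<le> \<bar>x n - a\<bar>} \<union> {n\<in>S2. \<epsilon> \<le> \<bar>x n - b\<bar>})"
    using s1 s2 c1 c2 e unfolding conv_def by auto
  ultimately show False using inf finite_subset by blast
qed

lemma subseq_ae:
  fixes Q :: "'a measure" and X :: "nat \<Rightarrow> 'a \<Rightarrow> real" and Z :: "'a \<Rightarrow> real"
  assumes Q: "prob_space Q" and mX: "\<And>n. X n \<in> borel_measurable Q" and mZ: "Z \<in> borel_measurable Q"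
    and lim: "\<And>\<epsilon>. \<epsilon> > 0 \<Longrightarrow> ((\<lambda>n. measure Q {\<omega>\<in>space Q. \<epsilon> < \<bar>X n \<omega> - Z \<omega>\<bar>}) \<longlongrightarrow> 0) sequentially"
  shows "\<exists>g. \<forall>h. (\<forall>j. g j \<le> h j) \<longrightarrow> (AE \<omega> in Q. (\<lambda>j. X (h j) \<omega>) \<longlonglongrightarrow> Z \<omega>)"
proof -
  interpret prob_space Q by (rule Q)
  have "\<exists>N. \<forall>n\<ge>N. measure Q {\<omega>\<in>space Q. (1/2)^k < \<bar>X n \<omega> - Z \<omega>\<bar>} < (1/2)^k" for k :: nat
  proof -
    have "((\<lambda>n. measure Q {\<omega>\<in>space Q. (1/2)^k < \<bar>X n \<omega> - Z \<omega>\<bar>}) \<longlongrightarrow> 0) sequentially"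
      by (rule lim) simp
    moreover have "(0::real) < (1/2)^k" by simp
    ultimately have "eventually (\<lambda>n. measure Q {\<omega>\<in>space Q. (1/2)^k < \<bar>X n \<omega> - Z \<omega>\<bar>} < (1/2)^k) sequentially"
      by (rule order_tendstoD(2))
    then show ?thesis unfolding eventually_sequentially by blast
  qed
  then obtain g where g: "\<And>k n. g k \<le> n \<Longrightarrow> measure Q {\<omega>\<in>space Q. (1/2)^k < \<bar>X n \<omega> - Z \<omega>\<bar>} < (1/2)^k"
    by metis
  have "AE \<omega> in Q. (\<lambda>j. X (h j) \<omega>) \<longlonglongrightarrow> Z \<omega>" if hg: "\<forall>j. g j \<le> h j" for h
  proof -
    define A where "A j = {\<omega>\<in>space Q. (1/2)^j < \<bar>X (h j) \<omega> - Z \<omega>\<bar>}" for j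
    have Am: "A j \<in> sets Q" for j unfolding A_def using mX mZ by measurable
    have Ale: "measure Q (A j) \<le> (1/2)^j" for j unfolding A_def using g hg by (simp add: less_imp_le)
    have "summable (\<lambda>j. measure Q (A j))"
      by (rule summable_comparison_test'[where g="\<lambda>j. (1/2::real)^j" and N=0])
         (auto simp: Ale)
    then have "AE \<omega> in Q. eventually (\<lambda>j. \<omega> \<in> space Q - A j) sequentially"
      by (intro borel_cantelli_AE1 Am) (auto simp: emeasure_eq_measure)
    then show ?thesis
    proof (rule AE_mp, intro AE_I2 impI)
      fix \<omega> assume "\<omega> \<in> space Q" and ev: "eventually (\<lambda>j. \<omega> \<in> space Q - A j) sequentially"
      have "eventually (\<lambda>j. norm (X (h j) \<omega> - Z \<omega>) \<le> (1/2)^j) sequentially"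
        using ev by eventually_elim (auto simp: A_def)
      moreover have "(\<lambda>j. (1/2::real)^j) \<longlonglongrightarrow> 0" by (rule LIMSEQ_realpow_zero) auto
      ultimately have "(\<lambda>j. X (h j) \<omega> - Z \<omega>) \<longlonglongrightarrow> 0" by (rule Lim_null_comparison)
      then show "(\<lambda>j. X (h j) \<omega>) \<longlonglongrightarrow> Z \<omega>" by (rule LIM_zero_cancel)
    qed
  qed
  then show ?thesis by blast
qed




lemma gen_Pow:
  assumes "filtration M F" "t \<in> {0..1}"
  shows "F t \<union> null_sets_of M P \<subseteq> Pow (space M)"
  using assms sets.space_closed[of M] unfolding filtration_def null_sets_of_def by blast

lemma gen_completion:
  assumes "filtration M F" "t \<in> {0..1}" "sets P = sets M"
  shows "sigma_sets (space M) (F t \<union> null_sets_of M P) \<subseteq> sets (completion P)"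
proof -
  have sp: "space (completion P) = space M" using assms(3) sets_eq_imp_space_eq by simp
  show ?thesis
  proof (rule sigma_algebra.sigma_sets_subset[where \<Omega>="space M"])
    show "sigma_algebra (space M) (sets (completion P))"
      using sets.sigma_algebra_axioms[of "completion P"] sp by simp
    show "F t \<union> null_sets_of M P \<subseteq> sets (completion P)"
    proof
      fix A assume "A \<in> F t \<union> null_sets_of M P"
      then show "A \<in> sets (completion P)"
      proof
        assume "A \<in> F t"
        then have "A \<in> sets M" using assms unfolding filtration_def by auto
        then show ?thesis using assms(3) by (metis sets_completionI_sets)
      next
        assume "A \<in> null_sets_of M P"
        then obtain B where "B \<in> sets M" "A \<subseteq> B" "emeasure P B = 0" unfolding null_sets_of_def by auto
        then have "B \<in> null_sets P" using assms(3) by auto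
        then show ?thesis using \<open>A \<subseteq> B\<close> null_sets_completion by blast
      qed
    qed
  qed
qed

lemma Fstar_sub:
  assumes "P \<in> \<P>"
  shows "Fstar M \<P> F t \<subseteq> sigma_sets (space M) (F t \<union> null_sets_of M P)"
  using assms unfolding Fstar_def by blast

lemma Fstar_Pow: "Fstar M \<P> F t \<subseteq> Pow (space M)" unfolding Fstar_def by blast

lemma adapted_gen:
  fixes f :: "'a \<Rightarrow> real"
  assumes f: "f \<in> measurable (sigma (space M) (Fstar M \<P> F t)) borel"
    and P: "P \<in> \<P>" and fil: "filtration M F" and t: "t \<in> {0..1}"
  shows "f \<in> borel_measurable (sigma (space M) (F t \<union> null_sets_of M P))"
proof (rule measurableI)
  let ?G = "F t \<union> null_sets_of M P"
  have GP: "?G \<subseteq> Pow (space M)" by (rule gen_Pow[OF fil t])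
  fix A :: "real set" assume A: "A \<in> sets borel"
  have "f -` A \<inter> space M \<in> sigma_sets (space M) (Fstar M \<P> F t)"
    using measurable_sets[OF f A] by (simp add: sets_measure_of[OF Fstar_Pow] space_measure_of_conv)
  also have "\<dots> \<subseteq> sigma_sets (space M) ?G"
    by (rule sigma_algebra.sigma_sets_subset[OF sigma_algebra_sigma_sets[OF GP] Fstar_sub[OF P, of M F t]])
  finally show "f -` A \<inter> space (sigma (space M) ?G) \<in> sets (sigma (space M) ?G)"
    by (simp add: sets_measure_of[OF GP] space_measure_of_conv)
qed (simp)

lemma gen_to_completion:
  fixes f :: "'a \<Rightarrow> real"
  assumes f: "f \<in> borel_measurable (sigma (space M) (F t \<union> null_sets_of M P))"
    and fil: "filtration M F" and t: "t \<in> {0..1}" and PM: "sets P = sets M"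
  shows "f \<in> borel_measurable (completion P)"
proof (rule measurableI)
  let ?G = "F t \<union> null_sets_of M P"
  have GP: "?G \<subseteq> Pow (space M)" by (rule gen_Pow[OF fil t])
  have sp: "space (completion P) = space M" using PM sets_eq_imp_space_eq by simp
  fix A :: "real set" assume A: "A \<in> sets borel"
  have "f -` A \<inter> space M \<in> sigma_sets (space M) ?G"
    using measurable_sets[OF f A] by (simp add: sets_measure_of[OF GP] space_measure_of_conv)
  then show "f -` A \<inter> space (completion P) \<in> sets (completion P)"
    using gen_completion[OF fil t PM] sp by auto
qed simp

lemma ae_limit_gen:
  fixes f :: "nat \<Rightarrow> 'a \<Rightarrow> real" and h :: "'a \<Rightarrow> real"
  assumes fil: "filtration M F" and t: "t \<in> {0..1}"
    and mf: "\<And>j. f j \<in> borel_measurable (sigma (space M) (F t \<union> null_sets_of M P))"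
    and E: "E \<in> null_sets_of M P"
    and lim: "\<And>\<omega>. \<omega> \<in> space M - E \<Longrightarrow> (\<lambda>j. f j \<omega>) \<longlonglongrightarrow> h \<omega>"
  shows "h \<in> borel_measurable (sigma (space M) (F t \<union> null_sets_of M P))"
proof -
  let ?G = "F t \<union> null_sets_of M P"
  let ?Ms = "sigma (space M) ?G"
  have GP: "?G \<subseteq> Pow (space M)" by (rule gen_Pow[OF fil t])
  have sMs: "sets ?Ms = sigma_sets (space M) ?G" by (rule sets_measure_of[OF GP])
  have spMs: "space ?Ms = space M" by (simp add: space_measure_of_conv)
  have sub: "B \<in> sets ?Ms" if "B \<subseteq> E" for B
  proof -
    have "B \<in> null_sets_of M P" using E that unfolding null_sets_of_def by blast
    then show ?thesis unfolding sMs by (auto intro: sigma_sets.Basic)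
  qed
  define h' where "h' \<omega> = (if \<omega> \<in> E then 0 else h \<omega>)" for \<omega>
  have "h' \<in> borel_measurable ?Ms"
  proof (rule borel_measurable_LIMSEQ_real[where u="\<lambda>j \<omega>. if \<omega> \<in> E then 0 else f j \<omega>"])
    fix \<omega> assume "\<omega> \<in> space ?Ms"
    then show "(\<lambda>j. if \<omega> \<in> E then 0 else f j \<omega>) \<longlonglongrightarrow> h' \<omega>"
      using lim[of \<omega>] spMs unfolding h'_def by auto
  next
    fix j
    show "(\<lambda>\<omega>. if \<omega> \<in> E then 0 else f j \<omega>) \<in> borel_measurable ?Ms"
      by (rule measurable_If_set) (auto intro: mf sub)
  qed
  show ?thesis
  proof (rule measurableI)
    fix A :: "real set" assume A: "A \<in> sets borel"
    have eq: "h -` A \<inter> space ?Ms = (h' -` A \<inter> space ?Ms - E) \<union> (h -` A \<inter> space ?Ms \<inter> E)"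
      unfolding h'_def by auto
    have 1: "h' -` A \<inter> space ?Ms \<in> sets ?Ms" using measurable_sets[OF \<open>h' \<in> _\<close> A] .
    have 2: "E \<in> sets ?Ms" using sub by blast
    have 3: "h -` A \<inter> space ?Ms \<inter> E \<in> sets ?Ms" using sub by blast
    show "h -` A \<inter> space ?Ms \<in> sets ?Ms" by (subst eq) (intro sets.Un sets.Diff 1 2 3)
  qed simp
qed

lemma cadlag_unique:
  fixes f g :: "real \<Rightarrow> real"
  assumes f: "cadlag_path f" and g: "cadlag_path g"
    and eq: "\<forall>s\<in>{s. s \<in> \<rat> \<and> s \<in> {0..1}}. f s = g s" and t: "t \<in> {0..1}"
  shows "f t = g t"
proof (cases "t = 1")
  case True then show ?thesis using eq by auto
next
  case False
  then have t1: "t \<in> {0..<1}" using t by auto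
  have "((\<lambda>s. f s - g s) \<longlongrightarrow> f t - g t) (at_right t)"
    using f g t1 unfolding cadlag_path_def by (intro tendsto_diff) auto
  show ?thesis
  proof (rule ccontr)
    assume ne: "f t \<noteq> g t"
    let ?c = "f t - g t"
    have "eventually (\<lambda>s. dist (f s - g s) ?c < \<bar>?c\<bar>) (at_right t)"
      using \<open>((\<lambda>s. f s - g s) \<longlongrightarrow> _) _\<close> ne by (auto simp: tendsto_iff)
    then obtain b where b: "b > t" "\<forall>s>t. s < b \<longrightarrow> dist (f s - g s) ?c < \<bar>?c\<bar>"
      unfolding eventually_at_right_field by blast
    obtain r where r: "r \<in> \<rat>" "t < r" "r < min b 1"
      using Rats_dense_in_real[of t "min b 1"] b t1 by auto
    then have "r \<in> {s. s \<in> \<rat> \<and> s \<in> {0..1}}" using t1 by auto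
    then have "f r - g r = 0" using eq by auto
    moreover have "dist (f r - g r) ?c < \<bar>?c\<bar>" using b r by auto
    ultimately show False by (simp add: dist_real_def)
  qed
qed




theorem lemma2p5:
  fixes M :: "'a measure" and F :: "real \<Rightarrow> 'a set set" and \<P> :: "'a measure set"
    and Yn :: "nat \<Rightarrow> real \<Rightarrow> 'a \<Rightarrow> real"
    and YP :: "'a measure \<Rightarrow> real \<Rightarrow> 'a \<Rightarrow> real"
  assumes CH: CH
    and rc: "right_continuous_filtration M F"
    and probs: "\<forall>P\<in>\<P>. prob_space P \<and> sets P = sets M"
    and Yn_adapted: "\<forall>n. adapted M (Fstar M \<P> F) (Yn n)"
    and Yn_cadlag: "\<forall>n. cadlag M (Yn n)"
    and YP_process: "\<forall>P\<in>\<P>. (\<forall>t\<in>{0..1}. YP P t \<in> borel_measurable M) \<and> cadlag M (YP P)"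
    and limits: "\<forall>P\<in>\<P>. \<forall>t\<in>{0..1}. \<forall>\<epsilon>>0.
           ((\<lambda>n. measure (completion P) {\<omega>\<in>space M. \<bar>Yn n t \<omega> - YP P t \<omega>\<bar> > \<epsilon>}) \<longlongrightarrow> 0) sequentially"
  shows "\<exists>Y :: real \<Rightarrow> 'a \<Rightarrow> real. adapted M (Fstar M \<P> F) Y \<and> cadlag M Y \<and>
     (\<forall>P\<in>\<P>. AE \<omega> in completion P. \<forall>t\<in>{0..1}. Y t \<omega> = YP P t \<omega>)"
proof -
  obtain Sf :: "(nat \<Rightarrow> nat) \<Rightarrow> nat set" where sp: "\<forall>g. sparse (Sf g) g"
    and dir: "\<forall>g1 g2. \<exists>g. finite (Sf g - Sf g1) \<and> finite (Sf g - Sf g2)"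
    using family[OF CH] by blast
  have fil: "filtration M F" using rc unfolding right_continuous_filtration_def by blast
  define Z where "Z t \<omega> = (SOME a. \<exists>g. conv (Sf g) (\<lambda>n. Yn n t \<omega>) a)" for t \<omega>
  have Zeq: "Z t \<omega> = a" if c: "conv (Sf g) (\<lambda>n. Yn n t \<omega>) a" for t \<omega> g a
  proof -
    have "\<exists>g. conv (Sf g) (\<lambda>n. Yn n t \<omega>) (Z t \<omega>)" unfolding Z_def by (rule someI_ex) (use c in blast)
    then obtain g' where c': "conv (Sf g') (\<lambda>n. Yn n t \<omega>) (Z t \<omega>)" by blast
    obtain g'' where "finite (Sf g'' - Sf g')" "finite (Sf g'' - Sf g)" using dir by blast
    then show ?thesis using conv_unique[OF sparse_infinite[OF sp[rule_format]] _ _ c' c] by blast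
  qed
  define D where "D = {s::real. s \<in> \<rat> \<and> s \<in> {0..1}}"
  have cD: "countable D" unfolding D_def by (rule countable_subset[OF _ countable_rat]) auto
  define good where "good \<omega> f \<longleftrightarrow> cadlag_path f \<and> (\<forall>s\<in>D. f s = Z s \<omega>)" for \<omega> f
  define Y where "Y t \<omega> = (if \<exists>f. good \<omega> f then (SOME f. good \<omega> f) t else 0)" for t \<omega>

  have key: "\<exists>h. AE \<omega> in completion P. (\<lambda>j. Yn (h j) t \<omega>) \<longlonglongrightarrow> YP P t \<omega> \<and> Z t \<omega> = YP P t \<omega>"
    if P: "P \<in> \<P>" and t: "t \<in> {0..1}" for P t
  proof -
    have Pp: "prob_space P" and PM: "sets P = sets M" using probs P by auto
    have Q: "prob_space (completion P)" using prob_space.prob_space_completion[OF Pp] .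
    have spQ: "space (completion P) = space M" using PM sets_eq_imp_space_eq by simp
    have mX: "Yn n t \<in> borel_measurable (completion P)" for n
      using gen_to_completion[OF adapted_gen[OF _ P fil t] fil t PM] Yn_adapted t
      unfolding adapted_def by blast
    have mZ: "YP P t \<in> borel_measurable (completion P)"
    proof -
      have "YP P t \<in> borel_measurable M" using YP_process P t by blast
      then have "YP P t \<in> borel_measurable P" using measurable_cong_sets[of P M borel borel] PM by simp
      then show ?thesis by (rule measurable_completion)
    qed
    have lim: "((\<lambda>n. measure (completion P) {\<omega>\<in>space (completion P). \<epsilon> < \<bar>Yn n t \<omega> - YP P t \<omega>\<bar>}) \<longlongrightarrow> 0) sequentially"
      if "\<epsilon> > 0" for \<epsilon>
      using limits P t spQ that by auto
    obtain g where g: "\<forall>h. (\<forall>j. g j \<le> h j) \<longrightarrow> (AE \<omega> in completion P. (\<lambda>j. Yn (h j) t \<omega>) \<longlonglongrightarrow> YP P t \<omega>)"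
      using subseq_ae[OF Q mX mZ lim] by blast
    obtain h where h: "strict_mono h" "Sf g = range h" "\<forall>j. g j \<le> h j"
      using sp unfolding sparse_def by blast
    have "AE \<omega> in completion P. (\<lambda>j. Yn (h j) t \<omega>) \<longlonglongrightarrow> YP P t \<omega>" using g h by blast
    then have "AE \<omega> in completion P. (\<lambda>j. Yn (h j) t \<omega>) \<longlonglongrightarrow> YP P t \<omega> \<and> Z t \<omega> = YP P t \<omega>"
    proof (rule eventually_mono)
      fix \<omega> assume l: "(\<lambda>j. Yn (h j) t \<omega>) \<longlonglongrightarrow> YP P t \<omega>"
      then have "conv (Sf g) (\<lambda>n. Yn n t \<omega>) (YP P t \<omega>)" using conv_of_seq[of "\<lambda>n. Yn n t \<omega>" h, OF l] h(2) by simp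
      then show "(\<lambda>j. Yn (h j) t \<omega>) \<longlonglongrightarrow> YP P t \<omega> \<and> Z t \<omega> = YP P t \<omega>" using l Zeq by blast
    qed
    then show ?thesis by blast
  qed

  have AEall: "AE \<omega> in completion P. \<forall>t\<in>{0..1}. Y t \<omega> = YP P t \<omega>" if P: "P \<in> \<P>" for P
  proof -
    have PM: "sets P = sets M" using probs P by auto
    have spQ: "space (completion P) = space M" using PM sets_eq_imp_space_eq by simp
    have "\<forall>s\<in>D. AE \<omega> in completion P. Z s \<omega> = YP P s \<omega>"
    proof
      fix s assume "s \<in> D"
      then have "s \<in> {0..1}" unfolding D_def by auto
      then obtain h where "AE \<omega> in completion P. (\<lambda>j. Yn (h j) s \<omega>) \<longlonglongrightarrow> YP P s \<omega> \<and> Z s \<omega> = YP P s \<omega>"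
        using key[OF P] by blast
      then show "AE \<omega> in completion P. Z s \<omega> = YP P s \<omega>" by (rule eventually_mono) auto
    qed
    then have "AE \<omega> in completion P. \<forall>s\<in>D. Z s \<omega> = YP P s \<omega>" by (subst AE_ball_countable[OF cD])
    then show ?thesis
    proof (rule AE_mp, intro AE_I2 impI ballI)
      fix \<omega> and t :: real assume \<omega>: "\<omega> \<in> space (completion P)" and zd: "\<forall>s\<in>D. Z s \<omega> = YP P s \<omega>"
        and t: "t \<in> {0..1}"
      have cad: "cadlag_path (\<lambda>t. YP P t \<omega>)" using YP_process P \<omega> spQ unfolding cadlag_def by auto
      have gd: "good \<omega> (\<lambda>t. YP P t \<omega>)" unfolding good_def using cad zd by auto
      then have ex: "\<exists>f. good \<omega> f" by blast
      have gf: "good \<omega> (SOME f. good \<omega> f)" using someI_ex[OF ex] .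
      have "(SOME f. good \<omega> f) t = YP P t \<omega>"
        using cadlag_unique[of "SOME f. good \<omega> f" "\<lambda>t. YP P t \<omega>" t] gf gd t
        unfolding good_def D_def by auto
      then show "Y t \<omega> = YP P t \<omega>" unfolding Y_def using ex by simp
    qed
  qed

  have cad: "cadlag M Y"
    unfolding cadlag_def
  proof
    fix \<omega> assume "\<omega> \<in> space M"
    show "cadlag_path (\<lambda>t. Y t \<omega>)"
    proof (cases "\<exists>f. good \<omega> f")
      case True
      then have "good \<omega> (SOME f. good \<omega> f)" by (rule someI_ex)
      moreover have "(\<lambda>t. Y t \<omega>) = (SOME f. good \<omega> f)" unfolding Y_def using True by auto
      ultimately show ?thesis unfolding good_def by auto
    next
      case False
      then have nE: "\<not> Ex (good \<omega>)" by blast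
      then have "(\<lambda>t. Y t \<omega>) = (\<lambda>t. 0)" unfolding Y_def by (subst if_not_P[OF nE]) (rule refl)
      moreover have "cadlag_path (\<lambda>t::real. 0::real)" unfolding cadlag_path_def by auto
      ultimately show ?thesis by simp
    qed
  qed

  have adp: "adapted M (Fstar M \<P> F) Y"
    unfolding adapted_def
  proof
    fix t :: real assume t: "t \<in> {0..1}"
    have measP: "Y t \<in> borel_measurable (sigma (space M) (F t \<union> null_sets_of M P))" if P: "P \<in> \<P>" for P
    proof -
      have PM: "sets P = sets M" using probs P by auto
      have spQ: "space (completion P) = space M" using PM sets_eq_imp_space_eq by simp
      obtain h where hk: "AE \<omega> in completion P. (\<lambda>j. Yn (h j) t \<omega>) \<longlonglongrightarrow> YP P t \<omega> \<and> Z t \<omega> = YP P t \<omega>"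
        using key[OF P t] by blast
      have "AE \<omega> in completion P. (\<lambda>j. Yn (h j) t \<omega>) \<longlonglongrightarrow> Y t \<omega>"
        using hk AEall[OF P] by eventually_elim (use t in auto)
      then obtain N where N: "{\<omega>\<in>space (completion P). \<not> (\<lambda>j. Yn (h j) t \<omega>) \<longlonglongrightarrow> Y t \<omega>} \<subseteq> N"
        "emeasure (completion P) N = 0" "N \<in> sets (completion P)" by (rule AE_E)
      then have "N \<in> null_sets (completion P)" by auto
      then obtain N' where N': "N' \<in> null_sets P" "N \<subseteq> N'"
        using null_sets_completion_iff2[THEN iffD1] by metis
      have N'M: "N' \<in> sets M" "emeasure P N' = 0" using N'(1) PM by auto
      define E where "E = {\<omega>\<in>space M. \<not> (\<lambda>j. Yn (h j) t \<omega>) \<longlonglongrightarrow> Y t \<omega>}"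
      have EN': "E \<subseteq> N'" using N(1) N'(2) spQ unfolding E_def by auto
      have EN: "E \<in> null_sets_of M P" unfolding null_sets_of_def
      proof (intro CollectI conjI bexI[of _ N'])
        show "E \<subseteq> space M" unfolding E_def by auto
      qed (use EN' N'M in auto)
      show ?thesis
      proof (rule ae_limit_gen[OF fil t _ EN, where f="\<lambda>j. Yn (h j) t"])
        fix j show "Yn (h j) t \<in> borel_measurable (sigma (space M) (F t \<union> null_sets_of M P))"
          using adapted_gen[OF _ P fil t] Yn_adapted t unfolding adapted_def by blast
      next
        fix \<omega> assume "\<omega> \<in> space M - E"
        then show "(\<lambda>j. Yn (h j) t \<omega>) \<longlonglongrightarrow> Y t \<omega>" unfolding E_def by auto
      qed
    qed
    show "Y t \<in> measurable (sigma (space M) (Fstar M \<P> F t)) borel"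
    proof (rule measurableI)
      fix A :: "real set" assume A: "A \<in> sets borel"
      have "Y t -` A \<inter> space M \<in> Fstar M \<P> F t"
        unfolding Fstar_def
      proof (intro IntI PowI INT_I)
        show "Y t -` A \<inter> space M \<subseteq> space M" by auto
      next
        fix P assume P: "P \<in> \<P>"
        show "Y t -` A \<inter> space M \<in> sigma_sets (space M) (F t \<union> null_sets_of M P)"
          using measurable_sets[OF measP[OF P] A]
          by (simp add: sets_measure_of[OF gen_Pow[OF fil t]] space_measure_of_conv)
      qed
      then show "Y t -` A \<inter> space (sigma (space M) (Fstar M \<P> F t)) \<in> sets (sigma (space M) (Fstar M \<P> F t))"
        by (simp add: sets_measure_of[OF Fstar_Pow] space_measure_of_conv sigma_sets.Basic)
    qed simp
  qed
  show ?thesis using adp cad AEall by blast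
qed


end
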